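(* Consider the Wiener system $$x_{k+1}=Ax_k+Bu_k,\qquad y_k=\phi(Cx_k+Du_k),$$ with $A\in\mathbb{R}^{n\times n}$, $B\in\mathbb{R}^{n\times m}$, $C\in\mathbb{R}^{1\times n}$, $D\in\mathbb{R}^{1\times m}$, where $(A,B)$ is controllable and $(A,C)$ is observable, and $\phi:\mathbb{R}\to\mathbb{R}^p$ is a bijection whose inverse satisfies $\phi^{-1}(y)=\sum_{i=1}^q b_i\tilde\phi_i(y)$ for all $y\in\mathbb{R}^p$, for known functions $\tilde\phi_i:\mathbb{R}^p\to\mathbb{R}$ and real coefficients $b_i$. Suppose $\{u_k,y_k\}_{k=0}^{N-1}$ is a trajectory of this system and $u$ is persistently exciting of order $L+n$. Define $z_k=(\tilde\phi_1(y_k),\dots,\tilde\phi_q(y_k))^\top$ for $k=0,\dots,N-1$. Let $\{\bar u_k,\bar y_k\}_{k=0}^{L-1}$ be an input-output sequence and define $\bar z_k=(\tilde\phi_1(\bar y_k),\dots,\tilde\phi_q(\bar y_k))^\top$. If there exists $\alpha\in\mathbb{R}^{N-L+1}$ such that $$\begin{bmatrix}H_L(u)\\ H_L(z)\end{bmatrix}\alpha=\begin{bmatrix}\bar u_{[0,L-1]}\\ \bar z_{[0,L-1]}\end{bmatrix},$$ then $\{\bar u_k,\bar y_k\}_{k=0}^{L-1}$ is a trajectory of the Wiener system.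
   Context: For a sequence $\{x_k\}_{k=0}^{N-1}$ with $x_k\in\mathbb{R}^d$ and $1\le L\le N$, the Hankel matrix $H_L(x)\in\mathbb{R}^{dL\times(N-L+1)}$ has $(i,j)$ block $x_{i+j}$ ($i=0,\dots,L-1$, $j=0,\dots,N-L$); $x_{[a,b]}$ is the stacked vector $(x_a^\top,\dots,x_b^\top)^\top$. The sequence is persistently exciting of order $L$ if $\operatorname{rank}H_L(x)=dL$. An input-output sequence $\{u_k,y_k\}_{k=0}^{N-1}$ is a trajectory of the Wiener system if there exist an initial state $\bar x\in\mathbb{R}^n$ and states $\{x_k\}_{k=0}^{N}$ with $x_0=\bar x$ satisfying the system equations for $k=0,\dots,N-1$. *)

theory Defs
  imports "Jordan_Normal_Form.DL_Rank"
begin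

definition mat_rank :: "real mat \<Rightarrow> nat" where
  "mat_rank M = vec_space.rank (dim_row M) M"

text \<open>Controllability matrix [B, AB, ..., A^(n-1) B] (n = dim_row A).\<close>
definition ctrb_mat :: "real mat \<Rightarrow> real mat \<Rightarrow> real mat" where
  "ctrb_mat A B = mat (dim_row A) (dim_row A * dim_col B)
     (\<lambda>(i,j). ((A ^\<^sub>m (j div dim_col B)) * B) $$ (i, j mod dim_col B))"

text \<open>Observability matrix [C; CA; ...; C A^(n-1)] (n = dim_row A).\<close>
definition obsv_mat :: "real mat \<Rightarrow> real mat \<Rightarrow> real mat" where
  "obsv_mat A C = mat (dim_row A * dim_row C) (dim_row A)
     (\<lambda>(i,j). (C * (A ^\<^sub>m (i div dim_row C))) $$ (i mod dim_row C, j))"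

definition controllable :: "real mat \<Rightarrow> real mat \<Rightarrow> bool" where
  "controllable A B \<longleftrightarrow> mat_rank (ctrb_mat A B) = dim_row A"

definition observable :: "real mat \<Rightarrow> real mat \<Rightarrow> bool" where
  "observable A C \<longleftrightarrow> mat_rank (obsv_mat A C) = dim_row A"

text \<open>Hankel matrix H_L(x) in R^{dL x (N-L+1)} of a sequence x_0..x_{N-1} in R^d:
  block (i,j) is x_{i+j}.\<close>
definition hankel :: "nat \<Rightarrow> nat \<Rightarrow> nat \<Rightarrow> (nat \<Rightarrow> real vec) \<Rightarrow> real mat" where
  "hankel d L N x = mat (d * L) (N - L + 1) (\<lambda>(i,j). x (i div d + j) $ (i mod d))"

definition stack :: "nat \<Rightarrow> nat \<Rightarrow> (nat \<Rightarrow> real vec) \<Rightarrow> real vec" where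
  "stack d L x = vec (d * L) (\<lambda>i. x (i div d) $ (i mod d))"

definition persistently_exciting :: "nat \<Rightarrow> nat \<Rightarrow> nat \<Rightarrow> (nat \<Rightarrow> real vec) \<Rightarrow> bool" where
  "persistently_exciting d L N x \<longleftrightarrow> mat_rank (hankel d L N x) = d * L"

text \<open>{u_k,y_k}_{k=0}^{N-1} is a trajectory of x_{k+1} = A x_k + B u_k, y_k = phi(C x_k + D u_k)
  (C, D have one row, so C x_k + D u_k is a scalar).\<close>
definition wiener_traj ::
  "real mat \<Rightarrow> real mat \<Rightarrow> real mat \<Rightarrow> real mat \<Rightarrow> (real \<Rightarrow> real vec) \<Rightarrow> nat
     \<Rightarrow> (nat \<Rightarrow> real vec) \<Rightarrow> (nat \<Rightarrow> real vec) \<Rightarrow> bool" where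
  "wiener_traj A B C D \<phi> N u y \<longleftrightarrow>
     (\<exists>xbar \<in> carrier_vec (dim_row A). \<exists>x :: nat \<Rightarrow> real vec.
        x 0 = xbar \<and> (\<forall>k\<le>N. x k \<in> carrier_vec (dim_row A)) \<and>
        (\<forall>k<N. x (Suc k) = A *\<^sub>v x k + B *\<^sub>v u k \<and>
               y k = \<phi> ((C *\<^sub>v x k + D *\<^sub>v u k) $ 0)))"

end

theory Submission
  imports Defs
begin

lemma hankel_mult_idx:
  assumes "i < d*L" "dim_vec a = N-L+1"
  shows "(hankel d L N x *\<^sub>v a) $ i = (\<Sum>j<N-L+1. x (i div d + j) $ (i mod d) * a$j)"
  using assms by (simp add: hankel_def scalar_prod_def atLeast0LessThan)

lemma stack_idx: "i < d*L \<Longrightarrow> stack d L x $ i = x (i div d) $ (i mod d)"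
  by (simp add: stack_def)

lemma idx_bound: "k < (L::nat) \<Longrightarrow> c < d \<Longrightarrow> k*d + c < d*L"
proof -
  assume "k < L" "c < d"
  hence "k*d + c < Suc k * d" by simp
  also have "\<dots> \<le> L * d" using \<open>k<L\<close> by (intro mult_le_mono1) simp
  finally show ?thesis by (simp add: mult.commute)
qed

lemma idx_div: "c < (d::nat) \<Longrightarrow> (k*d + c) div d = k" "c < (d::nat) \<Longrightarrow> (k*d + c) mod d = c"
  by auto

theorem proposition3:
  fixes A B C D :: "real mat" and n m p q N L :: nat
    and \<phi> :: "real \<Rightarrow> real vec" and \<phi>t :: "nat \<Rightarrow> real vec \<Rightarrow> real" and b :: "nat \<Rightarrow> real"
    and u y ubar ybar :: "nat \<Rightarrow> real vec" and \<alpha> :: "real vec"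
  assumes dims: "A \<in> carrier_mat n n" "B \<in> carrier_mat n m"
      "C \<in> carrier_mat 1 n" "D \<in> carrier_mat 1 m"
    and ctrb: "controllable A B" and obsv: "observable A C"
    and phi_bij: "bij_betw \<phi> UNIV (carrier_vec p)"
    and phi_inv: "\<forall>w \<in> carrier_vec p. inv_into UNIV \<phi> w = (\<Sum>i<q. b i * \<phi>t i w)"
    and L: "1 \<le> L" "L + n \<le> N"
    and u_dim: "\<forall>k<N. u k \<in> carrier_vec m"
    and traj: "wiener_traj A B C D \<phi> N u y"
    and pe: "persistently_exciting m (L + n) N u"
    and ubar_dim: "\<forall>k<L. ubar k \<in> carrier_vec m"
    and ybar_dim: "\<forall>k<L. ybar k \<in> carrier_vec p"
    and alpha: "\<alpha> \<in> carrier_vec (N - L + 1)"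
    and eq: "(hankel m L N u @\<^sub>r hankel q L N (\<lambda>k. vec q (\<lambda>i. \<phi>t i (y k)))) *\<^sub>v \<alpha>
             = stack m L ubar @\<^sub>v stack q L (\<lambda>k. vec q (\<lambda>i. \<phi>t i (ybar k)))"
  shows "wiener_traj A B C D \<phi> L ubar ybar"
proof -
  define M where "M = N - L + 1"
  define zy where "zy = (\<lambda>k. vec q (\<lambda>i. \<phi>t i (y k)))"
  define zb where "zb = (\<lambda>k. vec q (\<lambda>i. \<phi>t i (ybar k)))"
  have dimA: "dim_vec \<alpha> = M" using alpha M_def by simp
  have H1: "hankel m L N u \<in> carrier_mat (m*L) M" by (simp add: hankel_def M_def)
  have H2: "hankel q L N zy \<in> carrier_mat (q*L) M" by (simp add: hankel_def M_def)
  have "(hankel m L N u *\<^sub>v \<alpha>) @\<^sub>v (hankel q L N zy *\<^sub>v \<alpha>) = stack m L ubar @\<^sub>v stack q L zb"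
    using eq mat_mult_append[OF H1 H2, of \<alpha>] alpha M_def zy_def zb_def by simp
  moreover have "hankel m L N u *\<^sub>v \<alpha> \<in> carrier_vec (m*L)" using H1 alpha M_def by (metis mult_mat_vec_carrier)
  moreover have "stack m L ubar \<in> carrier_vec (m*L)" by (simp add: stack_def)
  ultimately have e1: "hankel m L N u *\<^sub>v \<alpha> = stack m L ubar"
     and e2: "hankel q L N zy *\<^sub>v \<alpha> = stack q L zb"
    using append_vec_eq by blast+
  have F1: "ubar k $ c = (\<Sum>j<M. u (k+j) $ c * \<alpha>$j)" if "k<L" "c<m" for k c
  proof -
    have i: "k*m+c < m*L" using idx_bound that by blast
    have "stack m L ubar $ (k*m+c) = (hankel m L N u *\<^sub>v \<alpha>) $ (k*m+c)" using e1 by simp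
    thus ?thesis using hankel_mult_idx[OF i, of \<alpha> N u] stack_idx[OF i, of ubar] dimA
        idx_div[OF that(2)] M_def by simp
  qed
  have F2: "\<phi>t i (ybar k) = (\<Sum>j<M. \<phi>t i (y (k+j)) * \<alpha>$j)" if "k<L" "i<q" for k i
  proof -
    have ii: "k*q+i < q*L" using idx_bound that by blast
    have "stack q L zb $ (k*q+i) = (hankel q L N zy *\<^sub>v \<alpha>) $ (k*q+i)" using e2 by simp
    thus ?thesis using hankel_mult_idx[OF ii, of \<alpha> N zy] stack_idx[OF ii, of zb] dimA
        idx_div[OF that(2)] M_def that by (simp add: zy_def zb_def)
  qed
  from traj obtain x where x0: "x 0 \<in> carrier_vec n" and xc: "\<forall>k\<le>N. x k \<in> carrier_vec n"
    and xs: "\<forall>k<N. x (Suc k) = A *\<^sub>v x k + B *\<^sub>v u k \<and> y k = \<phi> ((C *\<^sub>v x k + D *\<^sub>v u k) $ 0)"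
    unfolding wiener_traj_def using dims by auto
  define v where "v = (\<lambda>k. (C *\<^sub>v x k + D *\<^sub>v u k) $ 0)"
  define xb where "xb = (\<lambda>k. vec n (\<lambda>r. \<Sum>j<M. \<alpha>$j * x (j+k) $ r))"
  have inj: "inj \<phi>" using phi_bij bij_betw_def by blast
  have jk: "j + k < N" if "j<M" "k<L" for j k using that L M_def by linarith
  show ?thesis unfolding wiener_traj_def
  proof (intro bexI[of _ "xb 0"] exI[of _ xb] conjI allI impI)
    show "xb 0 \<in> carrier_vec (dim_row A)" using dims by (simp add: xb_def)
    show "xb k \<in> carrier_vec (dim_row A)" for k using dims by (simp add: xb_def)
    show "xb 0 = xb 0" ..
    fix k assume k: "k < L"
    show "xb (Suc k) = A *\<^sub>v xb k + B *\<^sub>v ubar k"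
    proof (rule eq_vecI)
      show "dim_vec (xb (Suc k)) = dim_vec (A *\<^sub>v xb k + B *\<^sub>v ubar k)"
        using dims by (simp add: xb_def)
      fix r assume "r < dim_vec (A *\<^sub>v xb k + B *\<^sub>v ubar k)"
      hence r: "r < n" using dims by simp
      have ub: "ubar k \<in> carrier_vec m" using ubar_dim k by simp
      have "xb (Suc k) $ r = (\<Sum>j<M. \<alpha>$j * (A *\<^sub>v x (j+k) + B *\<^sub>v u (j+k)) $ r)"
        using r xs jk k by (simp add: xb_def)
      also have "\<dots> = (\<Sum>j<M. \<alpha>$j * ((\<Sum>c<n. A$$(r,c) * x (j+k) $ c) + (\<Sum>c<m. B$$(r,c) * u (j+k) $ c)))"
      proof (rule sum.cong[OF refl])
        fix j assume "j \<in> {..<M}"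
        hence "x (j+k) \<in> carrier_vec n" "u (j+k) \<in> carrier_vec m" using xc u_dim jk[of j k] k by (auto intro: less_imp_le)
        thus "\<alpha>$j * (A *\<^sub>v x (j+k) + B *\<^sub>v u (j+k)) $ r =
          \<alpha>$j * ((\<Sum>c<n. A$$(r,c) * x (j+k) $ c) + (\<Sum>c<m. B$$(r,c) * u (j+k) $ c))"
          using dims r by (simp add: scalar_prod_def atLeast0LessThan row_def)
      qed
      also have "\<dots> = (\<Sum>c<n. A$$(r,c) * (\<Sum>j<M. \<alpha>$j * x (j+k) $ c)) + (\<Sum>c<m. B$$(r,c) * (\<Sum>j<M. u (k+j) $ c * \<alpha>$j))"
        by (simp add: algebra_simps sum_distrib_left sum.distrib sum.swap[of _ "{..<M}"] add.commute)
      also have "\<dots> = (A *\<^sub>v xb k + B *\<^sub>v ubar k) $ r"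
        using dims r ub F1[OF k] by (simp add: xb_def scalar_prod_def atLeast0LessThan row_def)
      finally show "xb (Suc k) $ r = (A *\<^sub>v xb k + B *\<^sub>v ubar k) $ r" .
    qed
    have ub: "ubar k \<in> carrier_vec m" using ubar_dim k by simp
    have o1: "(C *\<^sub>v xb k + D *\<^sub>v ubar k) $ 0 = (\<Sum>j<M. \<alpha>$j * v (j+k))"
    proof -
      have "(C *\<^sub>v xb k + D *\<^sub>v ubar k) $ 0 = (\<Sum>c<n. C$$(0,c) * (\<Sum>j<M. \<alpha>$j * x (j+k) $ c)) + (\<Sum>c<m. D$$(0,c) * (\<Sum>j<M. u (k+j) $ c * \<alpha>$j))"
        using dims ub F1[OF k] by (simp add: xb_def scalar_prod_def atLeast0LessThan row_def)
      also have "\<dots> = (\<Sum>j<M. \<alpha>$j * ((\<Sum>c<n. C$$(0,c) * x (j+k) $ c) + (\<Sum>c<m. D$$(0,c) * u (j+k) $ c)))"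
        by (simp add: algebra_simps sum_distrib_left sum.distrib sum.swap[of _ "{..<M}"] add.commute)
      also have "\<dots> = (\<Sum>j<M. \<alpha>$j * v (j+k))"
      proof (rule sum.cong[OF refl])
        fix j assume "j \<in> {..<M}"
        hence "x (j+k) \<in> carrier_vec n" "u (j+k) \<in> carrier_vec m" using xc u_dim jk[of j k] k by (auto intro: less_imp_le)
        thus "\<alpha>$j * ((\<Sum>c<n. C$$(0,c) * x (j+k) $ c) + (\<Sum>c<m. D$$(0,c) * u (j+k) $ c)) = \<alpha>$j * v (j+k)"
          using dims by (simp add: v_def scalar_prod_def atLeast0LessThan row_def)
      qed
      finally show ?thesis .
    qed
    have yinv: "inv_into UNIV \<phi> (y (j+k)) = v (j+k)" if "j<M" for j
      using xs jk[OF that k] inj by (simp add: v_def)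
    have yc: "y (j+k) \<in> carrier_vec p" if "j<M" for j
      using xs jk[OF that k] phi_bij by (metis bij_betw_apply UNIV_I)
    have "inv_into UNIV \<phi> (ybar k) = (\<Sum>i<q. b i * \<phi>t i (ybar k))" using phi_inv ybar_dim k by simp
    also have "\<dots> = (\<Sum>i<q. b i * (\<Sum>j<M. \<phi>t i (y (k+j)) * \<alpha>$j))" using F2[OF k] by simp
    also have "\<dots> = (\<Sum>j<M. \<alpha>$j * (\<Sum>i<q. b i * \<phi>t i (y (j+k))))"
      by (simp add: algebra_simps sum_distrib_left sum.swap[of _ "{..<M}"])
    also have "\<dots> = (\<Sum>j<M. \<alpha>$j * v (j+k))"
      using phi_inv yc yinv by (intro sum.cong) auto
    finally have "inv_into UNIV \<phi> (ybar k) = (C *\<^sub>v xb k + D *\<^sub>v ubar k) $ 0" using o1 by simp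
    moreover have "ybar k \<in> range \<phi>" using phi_bij ybar_dim k by (simp add: bij_betw_def)
    ultimately show "ybar k = \<phi> ((C *\<^sub>v xb k + D *\<^sub>v ubar k) $ 0)" by (metis f_inv_into_f)
  qed
qed

end
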